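(* For every locally-dominated input $\mathit{in} \in \mathcal{T}$, there exists a subset $S \subseteq \mathcal{T}$ consisting only of inputs that are not locally dominated, such that $\mathit{in} \sqsubseteq S$.
   Context: $\mathcal{T}$ is a finite set of inputs. Each input $\mathit{in}$ covers a nonempty finite set $\mathrm{Obj}(\mathit{in})$ of objectives and has a cost $c(\mathit{in}) > 0$. For $S \subseteq \mathcal{T}$, $\mathrm{Obj}(S) = \bigcup_{\mathit{in} \in S} \mathrm{Obj}(\mathit{in})$ and $c(S) = \sum_{\mathit{in} \in S} c(\mathit{in})$. There are no duplicates: two distinct inputs of $\mathcal{T}$ never have both the same set of covered objectives and the same cost. Local dominance of an input by a subset: for $\mathit{in} \in \mathcal{T}$ and $S \subseteq \mathcal{T}$, $\mathit{in} \sqsubseteq S$ iff $\mathit{in} \notin S$, $\mathrm{Obj}(\mathit{in}) \subseteq \mathrm{Obj}(S)$ and $c(\mathit{in}) \ge c(S)$. An input $\mathit{in} \in \mathcal{T}$ is locally dominated iff there exists $S \subseteq \mathcal{T}$ with $\mathit{in} \sqsubseteq S$. *)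

theory Defs
  imports Complex_Main
begin

definition ObjS :: "('i \<Rightarrow> 'o set) \<Rightarrow> 'i set \<Rightarrow> 'o set" where
  "ObjS Obj S = (\<Union>x\<in>S. Obj x)"

definition costS :: "('i \<Rightarrow> real) \<Rightarrow> 'i set \<Rightarrow> real" where
  "costS c S = (\<Sum>x\<in>S. c x)"

definition loc_dom_by :: "('i \<Rightarrow> 'o set) \<Rightarrow> ('i \<Rightarrow> real) \<Rightarrow> 'i \<Rightarrow> 'i set \<Rightarrow> bool" where
  "loc_dom_by Obj c x S \<longleftrightarrow> x \<notin> S \<and> Obj x \<subseteq> ObjS Obj S \<and> c x \<ge> costS c S"

definition locally_dominated :: "'i set \<Rightarrow> ('i \<Rightarrow> 'o set) \<Rightarrow> ('i \<Rightarrow> real) \<Rightarrow> 'i \<Rightarrow> bool" where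
  "locally_dominated T Obj c x \<longleftrightarrow> (\<exists>S. S \<subseteq> T \<and> loc_dom_by Obj c x S)"

end

theory Submission
  imports Defs
begin

lemma sum_UN_le_nonneg:
  fixes c :: "'i \<Rightarrow> real"
  assumes "finite A" "\<And>z. z \<in> A \<Longrightarrow> finite (f z)" "\<And>x. c x \<ge> 0"
  shows "sum c (\<Union>z\<in>A. f z) \<le> (\<Sum>z\<in>A. sum c (f z))"
  using assms
proof (induction A rule: finite_induct)
  case empty then show ?case by simp
next
  case (insert a A)
  have fin: "finite (\<Union>z\<in>A. f z)" using insert by auto
  have "sum c (\<Union>z\<in>insert a A. f z) = sum c (f a \<union> (\<Union>z\<in>A. f z))" by simp
  also have "\<dots> \<le> sum c (f a) + sum c (\<Union>z\<in>A. f z)"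
    using sum_Un[OF _ fin, of "f a" c] insert(4)[of a] insert(5)
    by (simp add: sum_nonneg)
  also have "\<dots> \<le> sum c (f a) + (\<Sum>z\<in>A. sum c (f z))" using insert by auto
  finally show ?case using insert by simp
qed

theorem mainTheorem10:
  fixes T :: "'i set" and Obj :: "'i \<Rightarrow> 'o set" and c :: "'i \<Rightarrow> real"
  assumes "finite T"
    and "\<And>x. x \<in> T \<Longrightarrow> Obj x \<noteq> {} \<and> finite (Obj x)"
    and "\<And>x. x \<in> T \<Longrightarrow> c x > 0"
    and "\<And>x y. x \<in> T \<Longrightarrow> y \<in> T \<Longrightarrow> x \<noteq> y \<Longrightarrow> \<not> (Obj x = Obj y \<and> c x = c y)"
    and "x \<in> T"
    and "locally_dominated T Obj c x"
  shows "\<exists>S. S \<subseteq> T \<and> (\<forall>y\<in>S. \<not> locally_dominated T Obj c y) \<and> loc_dom_by Obj c x S"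
proof -
  define R where "R = {(z,y). z \<in> T \<and> y \<in> T \<and> (c z < c y \<or> (c z = c y \<and> Obj y \<subset> Obj z))}"
  have finR: "finite R"
    by (rule finite_subset[OF _ finite_cartesian_product[OF assms(1) assms(1)]]) (auto simp: R_def)
  have transR: "trans R" unfolding R_def trans_def by auto
  have irrR: "irrefl R" unfolding R_def irrefl_def by auto
  have "R\<^sup>+ = R" using transR by (rule trancl_id)
  then have "acyclic R" using irrR by (simp add: acyclic_irrefl)
  then have wfR: "wf R" using finR by (simp add: finite_acyclic_wf)
  let ?P = "\<lambda>y. y \<in> T \<longrightarrow> locally_dominated T Obj c y \<longrightarrow>
     (\<exists>S. S \<subseteq> T \<and> (\<forall>w\<in>S. \<not> locally_dominated T Obj c w) \<and> loc_dom_by Obj c y S)"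
  have "?P y" for y
  proof (induction y rule: wf_induct[OF wfR])
    case (1 y)
    show ?case
    proof (intro impI)
      assume yT: "y \<in> T" and yd: "locally_dominated T Obj c y"
      then obtain S0 where S0T: "S0 \<subseteq> T" and dom: "loc_dom_by Obj c y S0"
        unfolding locally_dominated_def by blast
      have finS0: "finite S0" using S0T assms(1) finite_subset by blast
      have yS0: "y \<notin> S0" and objS0: "Obj y \<subseteq> ObjS Obj S0" and cS0: "c y \<ge> costS c S0"
        using dom unfolding loc_dom_by_def by auto
      have inR: "(z, y) \<in> R" if zS: "z \<in> S0" for z
      proof -
        have zT: "z \<in> T" using zS S0T by auto
        have zy: "z \<noteq> y" using zS yS0 by auto
        have eq: "sum c S0 = c z + sum c (S0 - {z})"
          using sum.remove[OF finS0 zS] by simp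
        have nn: "sum c (S0 - {z}) \<ge> 0" using S0T assms(3) by (intro sum_nonneg) (auto intro: less_imp_le)
        have le: "c z \<le> c y" using cS0 eq nn unfolding costS_def by linarith
        show ?thesis
        proof (cases "c z < c y")
          case True then show ?thesis using zT yT unfolding R_def by auto
        next
          case False
          then have czy: "c z = c y" using le by auto
          then have "sum c (S0 - {z}) \<le> 0" using cS0 eq unfolding costS_def by linarith
          then have "sum c (S0 - {z}) = 0" using nn by linarith
          moreover have "\<forall>w\<in>S0 - {z}. 0 \<le> c w" using S0T assms(3) by (auto intro: less_imp_le)
          ultimately have "\<forall>w\<in>S0 - {z}. c w = 0"
            using sum_nonneg_eq_0_iff[of "S0 - {z}" c] finS0 by auto
          then have "S0 - {z} = {}" using S0T assms(3) by force
          then have "S0 = {z}" using zS by auto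
          then have "Obj y \<subseteq> Obj z" using objS0 unfolding ObjS_def by auto
          moreover have "Obj y \<noteq> Obj z" using assms(4)[OF zT yT zy] czy by auto
          ultimately show ?thesis using zT yT czy unfolding R_def by auto
        qed
      qed
      define f where "f z = (if locally_dominated T Obj c z
          then (SOME S. S \<subseteq> T \<and> (\<forall>w\<in>S. \<not> locally_dominated T Obj c w) \<and> loc_dom_by Obj c z S)
          else {z})" for z
      have fz: "f z \<subseteq> T \<and> (\<forall>w\<in>f z. \<not> locally_dominated T Obj c w) \<and> Obj z \<subseteq> ObjS Obj (f z)
                 \<and> costS c (f z) \<le> c z" if zS: "z \<in> S0" for z
      proof (cases "locally_dominated T Obj c z")
        case True
        have "\<exists>S. S \<subseteq> T \<and> (\<forall>w\<in>S. \<not> locally_dominated T Obj c w) \<and> loc_dom_by Obj c z S"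
          using 1 inR[OF zS] zS S0T True by auto
        then have "f z \<subseteq> T \<and> (\<forall>w\<in>f z. \<not> locally_dominated T Obj c w) \<and> loc_dom_by Obj c z (f z)"
          unfolding f_def using True someI_ex by simp
        then show ?thesis unfolding loc_dom_by_def by auto
      next
        case False
        then show ?thesis using zS S0T unfolding f_def ObjS_def costS_def by auto
      qed
      define S where "S = (\<Union>z\<in>S0. f z)"
      have ST: "S \<subseteq> T" using fz unfolding S_def by auto
      have Snd: "\<forall>w\<in>S. \<not> locally_dominated T Obj c w" using fz unfolding S_def by auto
      have yS: "y \<notin> S" using Snd yd by auto
      have objS: "Obj y \<subseteq> ObjS Obj S" using objS0 fz unfolding ObjS_def S_def by fastforce
      let ?c = "\<lambda>w. if w \<in> T then c w else 0"
      have "costS c S = sum ?c S" unfolding costS_def using ST by (intro sum.cong) auto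
      also have "\<dots> \<le> (\<Sum>z\<in>S0. sum ?c (f z))"
        unfolding S_def
      proof (rule sum_UN_le_nonneg[OF finS0])
        show "finite (f z)" if "z \<in> S0" for z using fz[OF that] assms(1) finite_subset by blast
        show "0 \<le> ?c w" for w using assms(3)[of w] by (simp add: less_imp_le)
      qed
      also have "\<dots> = (\<Sum>z\<in>S0. costS c (f z))" unfolding costS_def
      proof (rule sum.cong[OF refl])
        fix z assume "z \<in> S0"
        then have "f z \<subseteq> T" using fz by blast
        then show "sum ?c (f z) = sum c (f z)" by (intro sum.cong) auto
      qed
      also have "\<dots> \<le> (\<Sum>z\<in>S0. c z)" using fz by (intro sum_mono) auto
      also have "\<dots> \<le> c y" using cS0 unfolding costS_def .
      finally have "costS c S \<le> c y" .
      then show "\<exists>S. S \<subseteq> T \<and> (\<forall>w\<in>S. \<not> locally_dominated T Obj c w) \<and> loc_dom_by Obj c y S"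
        using ST Snd yS objS unfolding loc_dom_by_def by blast
    qed
  qed
  then show ?thesis using assms(5,6) by blast
qed

end
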